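(* Let $X$ be a nonempty set and $\rho:X\times X\to[0,\infty)$ a function with $\rho(x,y)=0$ iff $x=y$ and $\rho(x,y)=\rho(y,x)$ for all $x,y$. Suppose that the topological space $(X,\mathcal T(\rho))$ is Hausdorff and compact, that $\rho$ is coherent, and that $T:X\to X$ satisfies $\rho(Tx,Ty)\le\lambda\rho(x,y)$ for some $\lambda\in[0,1)$ and all $x,y\in X$. Then $T$ has a unique fixed point.
   Context: $\mathcal T(\rho)$ is the topology on $X$ in which $U\subseteq X$ is open iff for every $x\in U$ there is $r>0$ with $B(x,r,\rho)=\{y\in X:\rho(x,y)<r\}\subseteq U$. The function $\rho$ is coherent if for all $a\in X$ and sequences $\{a_n\},\{b_n\}$ in $X$: $\lim_n\rho(a,a_n)=0$ and $\lim_n\rho(a_n,b_n)=0$ imply $\lim_n\rho(a,b_n)=0$. *)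

theory Defs
  imports "HOL-Analysis.Analysis"
begin

definition rball :: "'a set \<Rightarrow> ('a \<Rightarrow> 'a \<Rightarrow> real) \<Rightarrow> 'a \<Rightarrow> real \<Rightarrow> 'a set" where
  "rball X \<rho> x r = {y \<in> X. \<rho> x y < r}"

definition rho_open :: "'a set \<Rightarrow> ('a \<Rightarrow> 'a \<Rightarrow> real) \<Rightarrow> 'a set \<Rightarrow> bool" where
  "rho_open X \<rho> U \<longleftrightarrow> U \<subseteq> X \<and> (\<forall>x\<in>U. \<exists>r>0. rball X \<rho> x r \<subseteq> U)"

definition rho_topology :: "'a set \<Rightarrow> ('a \<Rightarrow> 'a \<Rightarrow> real) \<Rightarrow> 'a topology" where
  "rho_topology X \<rho> = topology (rho_open X \<rho>)"

definition coherent :: "'a set \<Rightarrow> ('a \<Rightarrow> 'a \<Rightarrow> real) \<Rightarrow> bool" where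
  "coherent X \<rho> \<longleftrightarrow> (\<forall>a\<in>X. \<forall>an bn. (\<forall>n. an n \<in> X) \<longrightarrow> (\<forall>n. bn n \<in> X) \<longrightarrow>
      (\<lambda>n. \<rho> a (an n)) \<longlonglongrightarrow> 0 \<longrightarrow> (\<lambda>n. \<rho> (an n) (bn n)) \<longlonglongrightarrow> 0 \<longrightarrow>
      (\<lambda>n. \<rho> a (bn n)) \<longlonglongrightarrow> 0)"

end

theory Submission
  imports Defs
begin

lemma rho_istop: "istopology (rho_open X \<rho>)"
  unfolding istopology_def
proof (intro conjI allI impI)
  fix S T assume S: "rho_open X \<rho> S" and T: "rho_open X \<rho> T"
  show "rho_open X \<rho> (S \<inter> T)"
    unfolding rho_open_def
  proof (intro conjI ballI)
    show "S \<inter> T \<subseteq> X" using S unfolding rho_open_def by blast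
    fix x assume x: "x \<in> S \<inter> T"
    obtain r1 where r1: "r1 > 0" "rball X \<rho> x r1 \<subseteq> S" using S x unfolding rho_open_def by blast
    obtain r2 where r2: "r2 > 0" "rball X \<rho> x r2 \<subseteq> T" using T x unfolding rho_open_def by blast
    have "rball X \<rho> x (min r1 r2) \<subseteq> S \<inter> T"
      using r1 r2 unfolding rball_def by auto
    then show "\<exists>r>0. rball X \<rho> x r \<subseteq> S \<inter> T" using r1 r2 by (intro exI[of _ "min r1 r2"]) auto
  qed
next
  fix K assume K: "\<forall>k\<in>K. rho_open X \<rho> k"
  show "rho_open X \<rho> (\<Union>K)"
    unfolding rho_open_def
  proof (intro conjI ballI)
    show "\<Union>K \<subseteq> X" using K unfolding rho_open_def by blast
    fix x assume "x \<in> \<Union>K"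
    then obtain k where k: "k \<in> K" "x \<in> k" by blast
    then obtain r where "r > 0" "rball X \<rho> x r \<subseteq> k" using K unfolding rho_open_def by blast
    then show "\<exists>r>0. rball X \<rho> x r \<subseteq> \<Union>K" using k by blast
  qed
qed

lemma openin_rho: "openin (rho_topology X \<rho>) = rho_open X \<rho>"
  unfolding rho_topology_def by (rule topology_inverse'[OF rho_istop])

lemma topspace_rho: "topspace (rho_topology X \<rho>) = X"
proof -
  have "rho_open X \<rho> X" unfolding rho_open_def rball_def by (auto intro: exI[of _ 1])
  then show ?thesis unfolding topspace_def openin_rho rho_open_def by blast
qed

lemma closedin_rho: "closedin (rho_topology X \<rho>) S \<longleftrightarrow>
   S \<subseteq> X \<and> (\<forall>x\<in>X-S. \<exists>r>0. rball X \<rho> x r \<inter> S = {})"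
  unfolding closedin_def topspace_rho openin_rho rho_open_def rball_def by blast

lemma cluster:
  fixes y :: "nat \<Rightarrow> 'a"
  assumes comp: "compact_space (rho_topology X \<rho>)"
    and zero: "\<forall>x\<in>X. \<forall>y\<in>X. \<rho> x y = 0 \<longleftrightarrow> x = y"
    and pos: "\<forall>x\<in>X. \<forall>y\<in>X. \<rho> x y \<ge> 0"
    and y: "\<And>n. y n \<in> X"
  shows "\<exists>z\<in>X. \<forall>e>0. \<forall>N. \<exists>n\<ge>N. \<rho> z (y n) < e"
proof (rule ccontr)
  assume "\<not> ?thesis"
  then have H: "\<forall>z\<in>X. \<exists>e>0. \<exists>N. \<forall>n\<ge>N. \<rho> z (y n) \<ge> e" by (simp add: not_less)
  define F where "F N = y ` {N..}" for N
  have cl: "closedin (rho_topology X \<rho>) (F N)" for N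
    unfolding closedin_rho
  proof (intro conjI ballI)
    show "F N \<subseteq> X" using y unfolding F_def by auto
    fix x assume x: "x \<in> X - F N"
    have xX0: "x \<in> X" using x by simp
    from H xX0 have "\<exists>e>0. \<exists>M. \<forall>n\<ge>M. \<rho> x (y n) \<ge> e" by (rule bspec)
    then obtain e M where e: "e > 0" "\<forall>n\<ge>M. \<rho> x (y n) \<ge> e" by blast
    define r where "r = Min (insert e ((\<lambda>n. \<rho> x (y n)) ` {N..<M}))"
    have "r > 0" unfolding r_def
    proof (subst Min_gr_iff)
      show "\<forall>a\<in>insert e ((\<lambda>n. \<rho> x (y n)) ` {N..<M}). 0 < a"
      proof
        fix a assume "a \<in> insert e ((\<lambda>n. \<rho> x (y n)) ` {N..<M})"
        then consider "a = e" | n where "n \<in> {N..<M}" "a = \<rho> x (y n)" by blast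
        then show "0 < a"
        proof cases
          case 1 then show ?thesis using e by simp
        next
          case 2
          have "x \<noteq> y n" using x 2 unfolding F_def by auto
          moreover have xX: "x \<in> X" using x by blast
          ultimately have "\<rho> x (y n) \<noteq> 0" using zero y by blast
          moreover have "\<rho> x (y n) \<ge> 0" using pos xX y by blast
          ultimately show ?thesis using 2 by linarith
        qed
      qed
    qed (auto intro: finite_imageI)
    moreover have "rball X \<rho> x r \<inter> F N = {}"
    proof (rule ccontr)
      assume "rball X \<rho> x r \<inter> F N \<noteq> {}"
      then obtain n where n: "n \<ge> N" "\<rho> x (y n) < r" unfolding rball_def F_def by auto
      show False
      proof (cases "n \<ge> M")
        case True
        have "r \<le> e" unfolding r_def by simp
        moreover have "\<rho> x (y n) \<ge> e" using e(2) True by blast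
        ultimately show ?thesis using n(2) by linarith
      next
        case False
        have "r \<le> \<rho> x (y n)" unfolding r_def using n False by (intro Min_le) auto
        then show ?thesis using n by simp
      qed
    qed
    ultimately show "\<exists>r>0. rball X \<rho> x r \<inter> F N = {}" by blast
  qed
  have fip: "\<Inter>\<G> \<noteq> {}" if G: "finite \<G>" "\<G> \<subseteq> range F" for \<G>
  proof -
    obtain I where I: "I \<subseteq> UNIV" "finite I" "\<G> = F ` I" using finite_subset_image[OF G] by blast
    define K where "K = Max (insert 0 I)"
    have "y K \<in> F i" if "i \<in> I" for i
      unfolding F_def K_def using that I by auto
    then show ?thesis using I by auto
  qed
  have c1: "\<forall>C\<in>range F. closedin (rho_topology X \<rho>) C" using cl by blast
  have c2: "\<forall>\<G>. finite \<G> \<and> \<G> \<subseteq> range F \<longrightarrow> \<Inter>\<G> \<noteq> {}" using fip by blast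
  have "(\<forall>C\<in>range F. closedin (rho_topology X \<rho>) C) \<and> (\<forall>\<G>. finite \<G> \<and> \<G> \<subseteq> range F \<longrightarrow> \<Inter>\<G> \<noteq> {}) \<longrightarrow> \<Inter>(range F) \<noteq> {}"
    using comp unfolding compact_space_fip by (rule spec)
  then have "\<Inter>(range F) \<noteq> {}" using c1 c2 by blast
  then obtain w where w: "\<And>N. w \<in> F N" by blast
  then obtain n0 where "w = y n0" unfolding F_def by blast
  then have wX: "w \<in> X" using y by simp
  from H wX have "\<exists>e>0. \<exists>M. \<forall>n\<ge>M. \<rho> w (y n) \<ge> e" by (rule bspec)
  then obtain e M where e: "e > 0" "\<forall>n\<ge>M. \<rho> w (y n) \<ge> e" by blast
  obtain n where "n \<ge> M" "w = y n" using w[of M] unfolding F_def by blast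
  then have "\<rho> w (y n) = 0" using zero wX by simp
  moreover have "\<rho> w (y n) \<ge> e" using e(2) \<open>n \<ge> M\<close> by blast
  ultimately show False using e(1) by linarith
qed

theorem mainTheorem3:
  fixes X :: "'a set" and \<rho> :: "'a \<Rightarrow> 'a \<Rightarrow> real" and T :: "'a \<Rightarrow> 'a" and lam :: real
  assumes "X \<noteq> {}"
    and "\<forall>x\<in>X. \<forall>y\<in>X. \<rho> x y \<ge> 0"
    and "\<forall>x\<in>X. \<forall>y\<in>X. \<rho> x y = 0 \<longleftrightarrow> x = y"
    and "\<forall>x\<in>X. \<forall>y\<in>X. \<rho> x y = \<rho> y x"
    and "Hausdorff_space (rho_topology X \<rho>)"
    and "compact_space (rho_topology X \<rho>)"
    and "coherent X \<rho>"
    and "T ` X \<subseteq> X"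
    and "0 \<le> lam" and "lam < 1"
    and "\<forall>x\<in>X. \<forall>y\<in>X. \<rho> (T x) (T y) \<le> lam * \<rho> x y"
  shows "\<exists>!x. x \<in> X \<and> T x = x"
proof -
  note A = assms
  have uniq: "x = y" if "x \<in> X" "T x = x" "y \<in> X" "T y = y" for x y
  proof -
    have "\<rho> (T x) (T y) \<le> lam * \<rho> x y" using A(11) that(1,3) by blast
    then have "\<rho> x y \<le> lam * \<rho> x y" using that(2,4) by simp
    moreover have "\<rho> x y \<ge> 0" using A(2) that by blast
    moreover have "\<not> \<rho> x y > 0"
    proof
      assume p: "\<rho> x y > 0"
      have "lam * \<rho> x y < 1 * \<rho> x y" by (rule mult_strict_right_mono[OF A(10) p])
      then show False using \<open>\<rho> x y \<le> lam * \<rho> x y\<close> by simp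
    qed
    ultimately have "\<rho> x y = 0" by linarith
    then show ?thesis using A(3) that by blast
  qed
  obtain x0 where x0: "x0 \<in> X" using A(1) by blast
  define xs where "xs n = (T ^^ n) x0" for n
  have xsX: "xs n \<in> X" for n
    unfolding xs_def by (induction n) (use x0 A(8) in auto)
  have xsS: "xs (Suc n) = T (xs n)" for n unfolding xs_def by simp
  define d0 where "d0 = \<rho> (xs 0) (xs 1)"
  have dn: "\<rho> (xs n) (xs (Suc n)) \<le> lam ^ n * d0" for n
  proof (induction n)
    case 0 then show ?case by (simp add: d0_def)
  next
    case (Suc n)
    have "\<rho> (xs (Suc n)) (xs (Suc (Suc n))) \<le> lam * \<rho> (xs n) (xs (Suc n))"
      using A(11) xsX[of n] xsX[of "Suc n"] unfolding xsS by blast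
    also have "\<dots> \<le> lam * (lam ^ n * d0)" using Suc A(9) by (simp add: mult_left_mono)
    finally show ?case by simp
  qed
  have d0pos: "d0 \<ge> 0" unfolding d0_def using A(2) xsX by blast
  obtain z where zX: "z \<in> X" and zc: "\<forall>e>0. \<forall>N. \<exists>n\<ge>N. \<rho> z (xs n) < e"
    using cluster[of X \<rho> xs, OF A(6) A(3) A(2) xsX] by blast
  define m where "m k = (SOME n. n \<ge> k \<and> \<rho> z (xs n) < inverse (real (Suc k)))" for k
  have mk: "m k \<ge> k \<and> \<rho> z (xs (m k)) < inverse (real (Suc k))" for k
  proof -
    have ip: "inverse (real (Suc k)) > 0" by simp
    have "\<exists>n\<ge>k. \<rho> z (xs n) < inverse (real (Suc k))" using zc ip by blast
    then have "\<exists>n. n \<ge> k \<and> \<rho> z (xs n) < inverse (real (Suc k))" by blast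
    then show ?thesis unfolding m_def by (rule someI_ex)
  qed
  have sq: "f \<longlonglongrightarrow> 0" if "\<And>n. 0 \<le> f n" "\<And>n. f n \<le> g n" "g \<longlonglongrightarrow> 0" for f g :: "nat \<Rightarrow> real"
    by (rule tendsto_sandwich[of "\<lambda>_. 0" f sequentially g]) (use that in auto)
  define a where "a k = xs (m k)" for k
  define b where "b k = xs (Suc (m k))" for k
  have aX: "a k \<in> X" and bX: "b k \<in> X" for k unfolding a_def b_def using xsX by auto
  have Tz: "T z \<in> X" using A(8) zX by blast
  have L1: "(\<lambda>k. \<rho> z (a k)) \<longlonglongrightarrow> 0"
  proof (rule sq[OF _ _ LIMSEQ_inverse_real_of_nat])
    show "0 \<le> \<rho> z (a k)" for k using A(2) zX aX by blast
    show "\<rho> z (a k) \<le> inverse (real (Suc k))" for k using mk[of k] unfolding a_def by simp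
  qed
  have L2: "(\<lambda>k. \<rho> (a k) (b k)) \<longlonglongrightarrow> 0"
  proof (rule sq)
    show "0 \<le> \<rho> (a k) (b k)" for k using A(2) aX bX by blast
    show "\<rho> (a k) (b k) \<le> lam ^ k * d0" for k
    proof -
      have "\<rho> (a k) (b k) \<le> lam ^ m k * d0" unfolding a_def b_def by (rule dn)
      also have "\<dots> \<le> lam ^ k * d0"
        using mk[of k] A(9) A(10) d0pos by (intro mult_right_mono power_decreasing) auto
      finally show ?thesis .
    qed
    show "(\<lambda>k. lam ^ k * d0) \<longlonglongrightarrow> 0"
      by (rule tendsto_mult_left_zero, rule LIMSEQ_power_zero) (use A(9) A(10) in auto)
  qed
  note coh = A(7)[unfolded coherent_def, rule_format]
  have L3: "(\<lambda>k. \<rho> z (b k)) \<longlonglongrightarrow> 0"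
    by (rule coh[OF zX _ _ L1 L2]) (use aX bX in auto)
  have L4: "(\<lambda>k. \<rho> (b k) (T z)) \<longlonglongrightarrow> 0"
  proof (rule sq)
    show "0 \<le> \<rho> (b k) (T z)" for k using A(2) bX Tz by blast
    show "\<rho> (b k) (T z) \<le> lam * \<rho> z (a k)" for k
    proof -
      have "b k = T (a k)" unfolding a_def b_def by (rule xsS)
      then have "\<rho> (b k) (T z) = \<rho> (T z) (b k)" using A(4) bX[of k] Tz by blast
      then have "\<rho> (b k) (T z) = \<rho> (T z) (T (a k))" using \<open>b k = T (a k)\<close> by simp
      also have "\<dots> \<le> lam * \<rho> z (a k)" using A(11) zX aX by blast
      finally show ?thesis .
    qed
    show "(\<lambda>k. lam * \<rho> z (a k)) \<longlonglongrightarrow> 0" using tendsto_mult_right_zero[OF L1] by simp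
  qed
  have "(\<lambda>k. \<rho> z (T z)) \<longlonglongrightarrow> 0"
    by (rule coh[OF zX _ _ L3 L4]) (use bX Tz in auto)
  then have "\<rho> z (T z) = 0" by (simp add: LIMSEQ_const_iff)
  then have "T z = z" using A(3) zX Tz by simp
  then show ?thesis using zX uniq by blast
qed

end
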